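(* Let $X$ be a Hausdorff Baire space which is developable and $\omega_1$-expandable. Then $dis(X) \geq \Delta(X)$.
   Context: All spaces are Hausdorff. $dis(X)$ denotes the least cardinal $\tau$ such that $X$ is the union of $\tau$ discrete subspaces. $\Delta(X)$ (the dispersion character of $X$) is the least cardinality of a non-empty open subset of $X$. For a collection $\mathcal{G}$ of subsets of $X$ and $x\in X$, $st(x,\mathcal{G})=\bigcup\{G\in\mathcal{G}: x\in G\}$ and $ord(x,\mathcal{G})=|\{G\in\mathcal{G}: x\in G\}|$. A sequence $\{\mathcal{G}_n:n\in\omega\}$ of open covers of $X$ is a development if $\{st(x,\mathcal{G}_n):n\in\omega\}$ is a local base at $x$ for every $x\in X$; $X$ is developable if it admits a development. For a cardinal $\kappa$, $X$ is $\kappa$-expandable if for every closed discrete set $D\subseteq X$ there is a family $\mathcal{G}=\{U_d: d\in D\}$ of open sets with $U_d\cap D=\{d\}$ for each $d\in D$ and $ord(x,\mathcal{G})\leq\kappa$ for every $x\in X$. *)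

theory Defs
  imports "HOL-Analysis.Analysis"
begin

definition Baire_space :: "'a topology \<Rightarrow> bool" where
  "Baire_space X \<longleftrightarrow>
     (\<forall>U :: nat \<Rightarrow> 'a set.
        (\<forall>n. openin X (U n) \<and> X closure_of (U n) = topspace X) \<longrightarrow>
        X closure_of (topspace X \<inter> (\<Inter>n. U n)) = topspace X)"

definition discrete_subspace :: "'a topology \<Rightarrow> 'a set \<Rightarrow> bool" where
  "discrete_subspace X D \<longleftrightarrow>
     D \<subseteq> topspace X \<and> (\<forall>x\<in>D. \<exists>U. openin X U \<and> U \<inter> D = {x})"

definition star :: "'a \<Rightarrow> 'a set set \<Rightarrow> 'a set" where
  "star x G = \<Union>{g \<in> G. x \<in> g}"

definition open_cover :: "'a topology \<Rightarrow> 'a set set \<Rightarrow> bool" where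
  "open_cover X G \<longleftrightarrow> (\<forall>g\<in>G. openin X g) \<and> \<Union>G = topspace X"

definition local_base :: "'a topology \<Rightarrow> 'a \<Rightarrow> 'a set set \<Rightarrow> bool" where
  "local_base X x B \<longleftrightarrow>
     (\<forall>b\<in>B. \<exists>V. openin X V \<and> x \<in> V \<and> V \<subseteq> b \<and> b \<subseteq> topspace X) \<and>
     (\<forall>W. openin X W \<and> x \<in> W \<longrightarrow> (\<exists>b\<in>B. b \<subseteq> W))"

definition development :: "'a topology \<Rightarrow> (nat \<Rightarrow> 'a set set) \<Rightarrow> bool" where
  "development X G \<longleftrightarrow>
     (\<forall>n. open_cover X (G n)) \<and>
     (\<forall>x\<in>topspace X. local_base X x {star x (G n) | n. True})"

definition developable :: "'a topology \<Rightarrow> bool" where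
  "developable X \<longleftrightarrow> (\<exists>G. development X G)"

text \<open>kappa-expandable, for a cardinal kappa given as a well-order relation
  (ord(x,G) \<le> kappa expressed via card_of).  Since U d \<inter> D = {d}, the map
  d \<mapsto> U d is injective, so counting indices d equals counting members of G.\<close>
definition expandable :: "'b rel \<Rightarrow> 'a topology \<Rightarrow> bool" where
  "expandable \<kappa> X \<longleftrightarrow>
     (\<forall>D. closedin X D \<and> discrete_subspace X D \<longrightarrow>
        (\<exists>U :: 'a \<Rightarrow> 'a set.
           (\<forall>d\<in>D. openin X (U d) \<and> U d \<inter> D = {d}) \<and>
           (\<forall>x\<in>topspace X. (card_of {U d | d. d \<in> D \<and> x \<in> U d}, \<kappa>) \<in> ordLeq)))"

abbreviation omega1 :: "nat set rel" where
  "omega1 \<equiv> cardSuc natLeq"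

definition dis_ge_dispersion :: "'a topology \<Rightarrow> bool" where
  "dis_ge_dispersion X \<longleftrightarrow>
     (\<forall>\<D>. (\<forall>D\<in>\<D>. discrete_subspace X D) \<and> \<Union>\<D> = topspace X \<longrightarrow>
        (\<exists>V. openin X V \<and> V \<noteq> {} \<and> (card_of V, card_of \<D>) \<in> ordLeq))"

end

theory Submission
  imports Defs
begin

lemma star_mem:
  assumes "open_cover X G" "x \<in> topspace X"
  shows "x \<in> star x G"
  using assms unfolding open_cover_def star_def by blast

lemma star_sym: "y \<in> star x G \<longleftrightarrow> x \<in> star y G"
  unfolding star_def by blast

lemma Baire_closed_cover:
  fixes F :: "nat \<Rightarrow> 'a set"
  assumes B: "Baire_space X" and ne: "topspace X \<noteq> {}"
    and cl: "\<And>k. closedin X (F k)" and cov: "topspace X \<subseteq> (\<Union>k. F k)"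
  shows "\<exists>k. X interior_of (F k) \<noteq> {}"
proof (rule ccontr)
  assume "\<not> ?thesis"
  hence int0: "\<And>k. X interior_of (F k) = {}" by blast
  define U where "U k = topspace X - F k" for k
  have "\<forall>n. openin X (U n) \<and> X closure_of (U n) = topspace X"
  proof
    fix n
    have "openin X (U n)" unfolding U_def by (rule openin_diff[OF openin_topspace cl])
    moreover have "X closure_of (U n) = topspace X"
      unfolding U_def closure_of_complement int0 by simp
    ultimately show "openin X (U n) \<and> X closure_of (U n) = topspace X" ..
  qed
  moreover have "(\<forall>n. openin X (U n) \<and> X closure_of (U n) = topspace X) \<longrightarrow>
        X closure_of (topspace X \<inter> (\<Inter>n. U n)) = topspace X"
    using B unfolding Baire_space_def by (rule spec)
  ultimately have "X closure_of (topspace X \<inter> (\<Inter>n. U n)) = topspace X" by (rule rev_mp)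
  moreover have "topspace X \<inter> (\<Inter>n. U n) = {}" using cov unfolding U_def by blast
  ultimately show False using ne by simp
qed

lemma Dn_props:
  assumes oc: "open_cover X Gn" and t1: "t1_space X" and D: "discrete_subspace X D"
  shows "closedin X {d\<in>D. star d Gn \<inter> D = {d}} \<and> discrete_subspace X {d\<in>D. star d Gn \<inter> D = {d}}"
proof -
  define E where "E = {d\<in>D. star d Gn \<inter> D = {d}}"
  have Dsub: "D \<subseteq> topspace X" using D unfolding discrete_subspace_def by blast
  have Esub: "E \<subseteq> topspace X" using Dsub unfolding E_def by blast
  have key: "\<And>g d. g \<in> Gn \<Longrightarrow> d \<in> g \<Longrightarrow> d \<in> E \<Longrightarrow> g \<inter> E \<subseteq> {d}"
  proof
    fix g d d' assume g: "g \<in> Gn" "d \<in> g" "d \<in> E" and d': "d' \<in> g \<inter> E"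
    have "d' \<in> star d Gn" using g d' unfolding star_def by blast
    moreover have "d' \<in> D" using d' unfolding E_def by blast
    ultimately show "d' \<in> {d}" using g(3) unfolding E_def by blast
  qed
  have gex: "\<And>x. x \<in> topspace X \<Longrightarrow> \<exists>g\<in>Gn. x \<in> g \<and> openin X g"
    using oc unfolding open_cover_def by blast
  have "openin X (topspace X - E)"
  proof (subst openin_subopen, intro ballI)
    fix x assume x: "x \<in> topspace X - E"
    then obtain g where g: "g \<in> Gn" "x \<in> g" "openin X g" using gex by blast
    show "\<exists>T. openin X T \<and> x \<in> T \<and> T \<subseteq> topspace X - E"
    proof (cases "g \<inter> E = {}")
      case True
      then show ?thesis using g openin_subset[OF g(3)] by blast
    next
      case False
      then obtain d where d: "d \<in> g" "d \<in> E" by blast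
      have ge: "g \<inter> E \<subseteq> {d}" using key[OF g(1) d] .
      have "closedin X {d}" using t1 d(2) Esub unfolding t1_space_closedin_singleton by blast
      hence "openin X (g - {d})" using g(3) by (simp add: openin_diff)
      moreover have "x \<noteq> d" using x d by blast
      ultimately show ?thesis using g ge openin_subset[OF g(3)] by blast
    qed
  qed
  hence "closedin X E" using Esub closedin_def by blast
  moreover have "discrete_subspace X E"
    unfolding discrete_subspace_def
  proof (intro conjI Esub ballI)
    fix d assume d: "d \<in> E"
    then obtain g where g: "g \<in> Gn" "d \<in> g" "openin X g" using gex Esub by blast
    show "\<exists>U. openin X U \<and> U \<inter> E = {d}" using key[OF g(1,2) d] g(2,3) d by (intro exI[of _ g]) blast
  qed
  ultimately show ?thesis unfolding E_def by (rule conjI)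
qed

theorem theorem1:
  fixes X :: "'a topology"
  assumes "topspace X \<noteq> {}"
    and "Hausdorff_space X"
    and "Baire_space X"
    and "developable X"
    and "expandable omega1 X"
  shows "dis_ge_dispersion X"
proof -
  obtain G where dev: "development X G" using assms(4) unfolding developable_def by blast
  have oc: "\<And>n. open_cover X (G n)" using dev by (simp add: development_def)
  have small: "\<exists>n. star x (G n) \<subseteq> W" if a: "x \<in> topspace X" "openin X W" "x \<in> W" for x W
  proof -
    have "local_base X x {star x (G n) |n. True}" using dev a(1) by (simp add: development_def)
    hence "\<forall>W. openin X W \<and> x \<in> W \<longrightarrow> (\<exists>b\<in>{star x (G n) |n. True}. b \<subseteq> W)"
      unfolding local_base_def by (rule conjunct2)
    hence "\<exists>b\<in>{star x (G n) |n. True}. b \<subseteq> W" using a(2,3) by blast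
    thus ?thesis by blast
  qed
  have gex: "\<exists>g\<in>G n. x \<in> g \<and> openin X g" if x: "x \<in> topspace X" for x n
  proof -
    have "(\<forall>g\<in>G n. openin X g) \<and> \<Union>(G n) = topspace X" using oc[of n] unfolding open_cover_def .
    hence "x \<in> \<Union>(G n)" "\<forall>g\<in>G n. openin X g" using x by auto
    thus ?thesis by blast
  qed
  have t1: "t1_space X" using assms(2) by (rule Hausdorff_imp_t1_space)
  show ?thesis unfolding dis_ge_dispersion_def
  proof (intro allI impI)
    fix \<D> :: "'a set set"
    assume cov: "(\<forall>D\<in>\<D>. discrete_subspace X D) \<and> \<Union>\<D> = topspace X"
    define E where "E i = {d\<in>fst i. star d (G (snd i)) \<inter> fst i = {d}}" for i :: "'a set \<times> nat"
    define I where "I = \<D> \<times> (UNIV :: nat set)"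
    have Ecd: "closedin X (E i) \<and> discrete_subspace X (E i)" if iI: "i \<in> I" for i
    proof -
      obtain D n where i: "i = (D, n)" "D \<in> \<D>" using iI unfolding I_def by blast
      have "discrete_subspace X D" using cov i(2) by blast
      from Dn_props[OF oc[of n] t1 this] show ?thesis unfolding E_def i(1) by simp
    qed
    have Esub: "\<And>i. i \<in> I \<Longrightarrow> E i \<subseteq> topspace X"
      using Ecd unfolding discrete_subspace_def by blast
    have Ecov: "\<And>x. x \<in> topspace X \<Longrightarrow> \<exists>i\<in>I. x \<in> E i"
    proof -
      fix x assume x: "x \<in> topspace X"
      then obtain D where D: "D \<in> \<D>" "x \<in> D" using cov by blast
      then obtain W where W: "openin X W" "W \<inter> D = {x}"
        using cov unfolding discrete_subspace_def by blast
      then obtain n where n: "star x (G n) \<subseteq> W" using small[OF x W(1)] by blast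
      have "x \<in> star x (G n)" using star_mem[OF oc x] .
      hence "x \<in> E (D, n)" using n W D unfolding E_def by auto
      thus "\<exists>i\<in>I. x \<in> E i" using D unfolding I_def by blast
    qed
    have Dne: "\<D> \<noteq> {}" using cov assms(1) by blast
    have Ine: "I \<noteq> {}" using Dne unfolding I_def by blast
    show "\<exists>V. openin X V \<and> V \<noteq> {} \<and> (card_of V, card_of \<D>) \<in> ordLeq"
    proof (cases "(card_of \<D>, natLeq) \<in> ordLeq")
      case True
      have "(card_of \<D>, card_of (UNIV :: nat set)) \<in> ordLeq"
        using ordLeq_ordIso_trans[OF True ordIso_symmetric[OF card_of_nat]] .
      hence "\<exists>f :: 'a set \<Rightarrow> nat. inj_on f \<D> \<and> f ` \<D> \<subseteq> UNIV"
        unfolding card_of_ordLeq[symmetric] .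
      hence "countable \<D>" unfolding countable_def by blast
      hence cI: "countable I" unfolding I_def by simp
      define F where "F k = E (from_nat_into I k)" for k
      have Fcl: "\<And>k. closedin X (F k)"
      proof -
        fix k show "closedin X (F k)" unfolding F_def using Ecd[OF from_nat_into[OF Ine, of k]] by (rule conjunct1)
      qed
      have "topspace X \<subseteq> (\<Union>k. F k)"
      proof
        fix x assume "x \<in> topspace X"
        then obtain i where i: "i \<in> I" "x \<in> E i" using Ecov by blast
        then have "i \<in> range (from_nat_into I)" using range_from_nat_into[OF Ine cI] by simp
        then obtain k where "i = from_nat_into I k" by (rule rangeE)
        thus "x \<in> (\<Union>k. F k)" using i unfolding F_def by blast
      qed
      hence "\<exists>k. X interior_of (F k) \<noteq> {}" by (rule Baire_closed_cover[OF assms(3,1) Fcl])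
      then obtain k where k: "X interior_of (F k) \<noteq> {}" by (elim exE)
      then obtain p where p: "p \<in> X interior_of (F k)" by blast
      have iI: "from_nat_into I k \<in> I" using from_nat_into[OF Ine] .
      have pE: "p \<in> F k" using p interior_of_subset[of X "F k"] by (rule subsetD[rotated])
      have "discrete_subspace X (F k)" unfolding F_def using Ecd[OF iI] by (rule conjunct2)
      hence "\<forall>x\<in>F k. \<exists>U. openin X U \<and> U \<inter> F k = {x}" unfolding discrete_subspace_def by (rule conjunct2)
      hence "\<exists>U. openin X U \<and> U \<inter> F k = {p}" using pE by (rule bspec)
      then obtain W where W: "openin X W" "W \<inter> F k = {p}" by (elim exE conjE)
      define V where "V = X interior_of (F k) \<inter> W"
      have pW: "p \<in> W" using W(2) by blast
      have "V \<subseteq> W \<inter> F k" unfolding V_def using interior_of_subset[of X "F k"] by blast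
      hence Vp: "V = {p}" using W(2) p pW unfolding V_def by blast
      have Vo: "openin X V" unfolding V_def using W(1) by (rule openin_Int[OF openin_interior_of])
      have Vc: "(card_of V, card_of \<D>) \<in> ordLeq" unfolding Vp by (rule card_of_singl_ordLeq[OF Dne])
      show ?thesis
        by (rule exI[of _ V], intro conjI Vo Vc) (simp add: Vp)
    next
      case False
      have nlt: "(natLeq, card_of \<D>) \<in> ordLess"
        using False unfolding not_ordLeq_iff_ordLess[OF natLeq_Well_order card_of_Well_order, symmetric] .
      have om: "(omega1, card_of \<D>) \<in> ordLeq"
        using nlt unfolding cardSuc_ordLess_ordLeq[OF natLeq_Card_order card_of_Card_order] .
      have inf: "infinite \<D>"
      proof
        assume "finite \<D>"
        hence "(card_of \<D>, natLeq) \<in> ordLess" unfolding finite_iff_ordLess_natLeq .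
        from ordLess_imp_ordLeq[OF this] False show False by contradiction
      qed
      have natle: "(card_of (UNIV :: nat set), card_of \<D>) \<in> ordLeq"
        using ordIso_ordLeq_trans[OF card_of_nat ordLess_imp_ordLeq[OF nlt]] .
      have Icard: "(card_of I, card_of \<D>) \<in> ordLeq"
        unfolding I_def
        by (rule card_of_Times_ordLeq_infinite_Field[OF _ ordLeq_refl[OF card_of_Card_order] natle card_of_Card_order])
           (simp only: Field_card_of inf, simp)
      have "\<forall>i\<in>I. \<exists>U :: 'a \<Rightarrow> 'a set. (\<forall>d\<in>E i. openin X (U d) \<and> U d \<inter> E i = {d}) \<and>
           (\<forall>x\<in>topspace X. (card_of {U d | d. d \<in> E i \<and> x \<in> U d}, omega1) \<in> ordLeq)"
      proof
        fix i assume "i \<in> I"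
        from Ecd[OF this] show "\<exists>U :: 'a \<Rightarrow> 'a set. (\<forall>d\<in>E i. openin X (U d) \<and> U d \<inter> E i = {d}) \<and>
           (\<forall>x\<in>topspace X. (card_of {U d | d. d \<in> E i \<and> x \<in> U d}, omega1) \<in> ordLeq)"
          by (rule assms(5)[unfolded expandable_def, rule_format])
      qed
      then have "\<exists>U. \<forall>i\<in>I. (\<forall>d\<in>E i. openin X (U i d) \<and> U i d \<inter> E i = {d}) \<and>
           (\<forall>x\<in>topspace X. (card_of {U i d | d. d \<in> E i \<and> x \<in> U i d}, omega1) \<in> ordLeq)"
        by (rule bchoice)
      then obtain U where U0: "\<forall>i\<in>I. (\<forall>d\<in>E i. openin X (U i d) \<and> U i d \<inter> E i = {d}) \<and>
           (\<forall>x\<in>topspace X. (card_of {U i d | d. d \<in> E i \<and> x \<in> U i d}, omega1) \<in> ordLeq)"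
        by (elim exE)
      have U: "\<And>i. i \<in> I \<Longrightarrow> (\<forall>d\<in>E i. openin X (U i d) \<and> U i d \<inter> E i = {d}) \<and>
           (\<forall>x\<in>topspace X. (card_of {U i d | d. d \<in> E i \<and> x \<in> U i d}, omega1) \<in> ordLeq)"
        using U0 by (rule bspec)
      define N where "N i x = {d \<in> E i. x \<in> U i d}" for i x
      have Ncard: "(card_of (N i x), card_of \<D>) \<in> ordLeq" if "i \<in> I" "x \<in> topspace X" for i x
      proof -
        have "inj_on (U i) (N i x)"
        proof (rule inj_onI)
          fix d d' assume "d \<in> N i x" "d' \<in> N i x" "U i d = U i d'"
          moreover have "d \<in> E i" "d' \<in> E i" using calculation(1,2) unfolding N_def by blast+
          ultimately have "{d} = {d'}" using U[OF that(1)] by metis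
          thus "d = d'" by blast
        qed
        moreover have "U i ` N i x \<subseteq> {U i d | d. d \<in> E i \<and> x \<in> U i d}" unfolding N_def by blast
        ultimately have "\<exists>f. inj_on f (N i x) \<and> f ` (N i x) \<subseteq> {U i d | d. d \<in> E i \<and> x \<in> U i d}"
          by blast
        hence c1: "(card_of (N i x), card_of {U i d | d. d \<in> E i \<and> x \<in> U i d}) \<in> ordLeq"
          unfolding card_of_ordLeq .
        have c2: "(card_of {U i d | d. d \<in> E i \<and> x \<in> U i d}, omega1) \<in> ordLeq"
          using U[OF that(1)] that(2) by blast
        show ?thesis by (rule ordLeq_transitive[OF ordLeq_transitive[OF c1 c2] om])
      qed
      have NUcard: "(card_of (\<Union>i\<in>I. N i x), card_of \<D>) \<in> ordLeq" if "x \<in> topspace X" for x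
        by (rule card_of_UNION_ordLeq_infinite[OF inf Icard]) (use Ncard that in blast)
      define C where "C m = (\<Union>i\<in>I. {d\<in>E i. star d (G m) \<subseteq> U i d})" for m
      have "topspace X \<subseteq> (\<Union>m. X closure_of C m)"
      proof
        fix x assume x: "x \<in> topspace X"
        then obtain i where i: "i \<in> I" "x \<in> E i" using Ecov by blast
        have "openin X (U i x)" "x \<in> U i x" using U[OF i(1)] i(2) by blast+
        hence "\<exists>m. star x (G m) \<subseteq> U i x" by (rule small[OF x])
        then obtain m where "star x (G m) \<subseteq> U i x" by (elim exE)
        hence "x \<in> topspace X \<inter> C m" using i x unfolding C_def by blast
        hence "x \<in> X closure_of C m" using closure_of_subset_Int[of X "C m"] by (rule subsetD[rotated])
        thus "x \<in> (\<Union>m. X closure_of C m)" by (rule UN_I[OF UNIV_I])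
      qed
      hence "\<exists>m. X interior_of (X closure_of C m) \<noteq> {}"
        by (rule Baire_closed_cover[OF assms(3,1) closedin_closure_of])
      then obtain m where m: "X interior_of (X closure_of C m) \<noteq> {}" by (elim exE)
      define W where "W = X interior_of (X closure_of C m)"
      obtain x where x: "x \<in> W" using m unfolding W_def by blast
      have Wo: "openin X W" unfolding W_def by simp
      have xt: "x \<in> topspace X" using openin_subset[OF Wo] x by (rule subsetD)
      obtain g where g: "g \<in> G m" "x \<in> g" "openin X g" using gex[OF xt, of m] by (elim bexE conjE)
      define V where "V = W \<inter> g"
      have Vo: "openin X V" unfolding V_def using Wo g by (simp add: openin_Int)
      have xV: "x \<in> V" unfolding V_def using x g by blast
      have Vt: "V \<subseteq> topspace X" using Vo by (rule openin_subset)
      define T where "T = V \<inter> C m"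
      have Tsub: "T \<subseteq> (\<Union>i\<in>I. N i x)"
      proof
        fix t assume t: "t \<in> T"
        then obtain i where i: "i \<in> I" "t \<in> E i" "star t (G m) \<subseteq> U i t"
          unfolding T_def C_def by blast
        have "t \<in> g" using t unfolding T_def V_def by blast
        hence "x \<in> star t (G m)" using g unfolding star_def by blast
        thus "t \<in> (\<Union>i\<in>I. N i x)" using i unfolding N_def by blast
      qed
      have Vsub: "V \<subseteq> (\<Union>t\<in>T. \<Union>i\<in>I. N i t)"
      proof
        fix d assume d: "d \<in> V"
        hence "d \<in> topspace X" using Vt by blast
        then obtain i where i: "i \<in> I" "d \<in> E i" using Ecov by blast
        have Ud: "openin X (U i d)" "U i d \<inter> E i = {d}" using U[OF i(1)] i(2) by blast+
        have O: "openin X (U i d \<inter> V)" using Ud(1) Vo by (rule openin_Int)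
        have O2: "d \<in> U i d \<inter> V" using Ud(2) d by blast
        have "d \<in> W" using d unfolding V_def by blast
        hence "d \<in> X closure_of C m" using interior_of_subset[of X "X closure_of C m"] unfolding W_def by (rule subsetD[rotated])
        hence "\<forall>T. d \<in> T \<and> openin X T \<longrightarrow> (\<exists>y. y \<in> C m \<and> y \<in> T)" unfolding in_closure_of by (rule conjunct2)
        hence "\<exists>y. y \<in> C m \<and> y \<in> U i d \<inter> V" using O O2 by blast
        then obtain t where t: "t \<in> C m" "t \<in> U i d \<inter> V" by (elim exE conjE)
        have "t \<in> T" using t unfolding T_def by blast
        moreover have "d \<in> N i t" using i t unfolding N_def by blast
        ultimately show "d \<in> (\<Union>t\<in>T. \<Union>i\<in>I. N i t)" using i by blast
      qed
      have Tcard: "(card_of T, card_of \<D>) \<in> ordLeq"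
        using ordLeq_transitive[OF card_of_mono1[OF Tsub] NUcard[OF xt]] .
      have "\<forall>t\<in>T. (card_of (\<Union>i\<in>I. N i t), card_of \<D>) \<in> ordLeq"
        using NUcard Vt unfolding T_def by blast
      hence "(card_of (\<Union>t\<in>T. \<Union>i\<in>I. N i t), card_of \<D>) \<in> ordLeq"
        by (rule card_of_UNION_ordLeq_infinite[OF inf Tcard])
      hence Vc: "(card_of V, card_of \<D>) \<in> ordLeq"
        by (rule ordLeq_transitive[OF card_of_mono1[OF Vsub]])
      have Vne: "V \<noteq> {}" using xV by blast
      show ?thesis by (rule exI[of _ V], intro conjI Vo Vne Vc)
    qed
  qed
qed

end
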